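(* Let $d\ge1$, $D=\{1,\dots,d\}$, let $\Pi$ and $Q$ be $d\times d$ stochastic matrices indexed by $D$, and define $\mathcal{E}^{(O)}_H:\mathcal{M}_d\otimes\mathcal{M}_d\to\mathcal{M}_d$ by linear extension of $\mathcal{E}^{(O)}_H(a\otimes b)=\mathcal{E}_H(\mathcal{E}_{H,O}(a\otimes\mathbf{1}_d)\otimes b)$. Then $\mathcal{E}^{(O)}_H$ is completely positive and identity preserving, and for all $a,b\in\mathcal{M}_d$ $$\mathcal{E}^{(O)}_H(a\otimes b)=a\diamond P_{H,O}(\mathbf{1}_d)\diamond P_H(b)=\sum_{i,j,k,m,l\in D}a_{ij}b_{ml}\sqrt{Q_{ik}Q_{jk}}\sqrt{\Pi_{im}\Pi_{jl}}\,e_{ij},$$ where $a=(a_{ij})$, $b=(b_{ij})$.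
   Context: $\mathcal{M}_d$ is the algebra of complex $d\times d$ matrices with identity $\mathbf{1}_d$ and matrix units $e_{ij}$; $\diamond$ is the Schur (entrywise) product. A stochastic matrix has nonnegative entries and row sums $1$. $P_H(A)=\sum_{i,j,k,l\in D}\sqrt{\Pi_{ik}\Pi_{jl}}\,a_{kl}e_{ij}$, $P_{H,O}(B)=\sum_{i,j,k,l\in D}\sqrt{Q_{ik}Q_{jl}}\,b_{kl}e_{ij}$, and $\mathcal{E}_H,\mathcal{E}_{H,O}$ are the linear extensions of $\mathcal{E}_H(a\otimes b)=a\diamond P_H(b)$, $\mathcal{E}_{H,O}(a\otimes b)=a\diamond P_{H,O}(b)$. *)

theory Defs
  imports "HOL-Analysis.Analysis"
begin

text \<open>Matrices in M_d are complex^'n^'n for a finite index type 'n (the set D, d = CARD('n)).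
  M_d \<otimes> M_d is identified with M_{d^2} = complex^('n*'n)^('n*'n) via the Kronecker product.\<close>

type_synonym 'n cmat = "complex^'n^'n"

definition stochastic :: "real^('n::finite)^'n \<Rightarrow> bool" where
  "stochastic S \<longleftrightarrow> (\<forall>i j. 0 \<le> S$i$j) \<and> (\<forall>i. (\<Sum>j\<in>UNIV. S$i$j) = 1)"

definition schur :: "complex^'n^'m \<Rightarrow> complex^'n^'m \<Rightarrow> complex^'n^'m" (infixl "\<diamond>" 70) where
  "a \<diamond> b = (\<chi> i j. a$i$j * b$i$j)"

definition kron :: "('n::finite) cmat \<Rightarrow> 'n cmat \<Rightarrow> ('n \<times> 'n) cmat" (infixr "\<otimes>\<^sub>K" 75) where
  "a \<otimes>\<^sub>K b = (\<chi> p q. a$(fst p)$(fst q) * b$(snd p)$(snd q))"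

definition mscale :: "complex \<Rightarrow> complex^'n^'m \<Rightarrow> complex^'n^'m" where
  "mscale c X = (\<chi> i j. c * X$i$j)"

definition mlinear :: "(complex^'a^'b \<Rightarrow> complex^'c^'e) \<Rightarrow> bool" where
  "mlinear F \<longleftrightarrow> (\<forall>X Y. F (X + Y) = F X + F Y) \<and> (\<forall>c X. F (mscale c X) = mscale c (F X))"

text \<open>P_H (with S = Pi) and P_{H,O} (with S = Q).\<close>
definition Pmap :: "real^('n::finite)^'n \<Rightarrow> 'n cmat \<Rightarrow> 'n cmat" where
  "Pmap S b = (\<chi> i j. \<Sum>k\<in>UNIV. \<Sum>l\<in>UNIV.
      complex_of_real (sqrt (S$i$k * S$j$l)) * b$k$l)"

text \<open>E_H (with S = Pi) and E_{H,O} (with S = Q): the linear extension of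
  a \<otimes> b \<mapsto> a \<diamond> Pmap S b, written out explicitly on M_d \<otimes> M_d = M_{d^2}.\<close>
definition Emap :: "real^('n::finite)^'n \<Rightarrow> ('n \<times> 'n) cmat \<Rightarrow> 'n cmat" where
  "Emap S X = (\<chi> i j. \<Sum>k\<in>UNIV. \<Sum>l\<in>UNIV.
      complex_of_real (sqrt (S$i$k * S$j$l)) * X$(i,k)$(j,l))"

definition psd_block :: "nat \<Rightarrow> (nat \<Rightarrow> nat \<Rightarrow> complex^('m::finite)^'m) \<Rightarrow> bool" where
  "psd_block n X \<longleftrightarrow> (\<forall>v :: nat \<Rightarrow> 'm \<Rightarrow> complex.
     let s = (\<Sum>i<n. \<Sum>j<n. \<Sum>p\<in>UNIV. \<Sum>q\<in>UNIV. cnj (v i p) * X i j $ p $ q * v j q)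
     in Im s = 0 \<and> Re s \<ge> 0)"

text \<open>Complete positivity: id_n \<otimes> F is positive for every n.\<close>
definition completely_positive :: "(complex^('a::finite)^'a \<Rightarrow> complex^('b::finite)^'b) \<Rightarrow> bool" where
  "completely_positive F \<longleftrightarrow>
     (\<forall>n X. psd_block n X \<longrightarrow> psd_block n (\<lambda>i j. F (X i j)))"

end

theory Submission
  imports Defs
begin

definition cQ :: "real^('n::finite)^'n \<Rightarrow> 'n \<Rightarrow> 'n \<Rightarrow> complex" where
  "cQ Q i j = (\<Sum>k\<in>UNIV. complex_of_real (sqrt (Q$i$k * Q$j$k)))"

lemma L1: "Emap Q (a \<otimes>\<^sub>K mat 1) = (\<chi> i j. a$i$j * cQ Q i j)"
  by (simp add: vec_eq_iff Emap_def kron_def mat_def cQ_def sum_distrib_left if_distrib sum.delta mult_ac cong: if_cong)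

lemma L1b: "Pmap Q (mat 1) = (\<chi> i j. cQ Q i j)"
  by (simp add: vec_eq_iff Pmap_def mat_def cQ_def if_distrib sum.delta cong: if_cong)

lemma L2: "Emap P (Y \<otimes>\<^sub>K b) = (\<chi> i j. Y$i$j * (\<Sum>m\<in>UNIV. \<Sum>l\<in>UNIV.
      complex_of_real (sqrt (P$i$m * P$j$l)) * b$m$l))"
  by (simp add: vec_eq_iff Emap_def kron_def sum_distrib_left mult_ac)

definition G :: "real^('n::finite)^'n \<Rightarrow> real^'n^'n \<Rightarrow> ('n \<times> 'n) cmat \<Rightarrow> 'n cmat" where
  "G P Q X = (\<chi> i j. cQ Q i j * (\<Sum>k\<in>UNIV. \<Sum>l\<in>UNIV.
      complex_of_real (sqrt (P$i$k * P$j$l)) * X$(i,k)$(j,l)))"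

definition U :: "'a::finite \<Rightarrow> 'a \<Rightarrow> complex^'a^'a" where
  "U p q = (\<chi> s t. if s = p \<and> t = q then 1 else 0)"

lemma U_kron: "U p q = U (fst p) (fst q) \<otimes>\<^sub>K U (snd p) (snd q)"
  by (auto simp: vec_eq_iff U_def kron_def prod_eq_iff)

lemma dsum: "(\<Sum>x\<in>(UNIV::'a::finite set). \<Sum>y\<in>(UNIV::'b::finite set). if i = x \<and> j = y then f x y else 0) = (f i j :: 'c::comm_monoid_add)"
proof -
  have "(\<Sum>x\<in>(UNIV::'a set). \<Sum>y\<in>(UNIV::'b set). if i = x \<and> j = y then f x y else 0)
     = (\<Sum>x\<in>(UNIV::'a set). if i = x then (\<Sum>y\<in>(UNIV::'b set). if j = y then f x y else 0) else 0)"
    by (rule sum.cong) auto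
  then show ?thesis by simp
qed

lemma decomp: "X = (\<Sum>p\<in>UNIV. \<Sum>q\<in>UNIV. mscale (X$p$q) (U p q))"
  by (simp add: vec_eq_iff sum_component mscale_def U_def if_distrib dsum cong: if_cong)

lemma mlin_0: "mlinear F \<Longrightarrow> F 0 = 0"
proof -
  assume "mlinear F"
  then have "F (mscale 0 0) = mscale 0 (F 0)" by (simp add: mlinear_def)
  moreover have "mscale 0 (0::complex^'a^'b) = 0" by (simp add: mscale_def vec_eq_iff)
  moreover have "mscale 0 (F 0) = 0" by (simp add: mscale_def vec_eq_iff)
  ultimately show ?thesis by metis
qed

lemma mlin_sum: "mlinear F \<Longrightarrow> F (sum f A) = (\<Sum>x\<in>A. F (f x))"
  apply (induction A rule: infinite_finite_induct)
  by (auto simp: mlin_0 mlinear_def)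

lemma mlin_decomp: "mlinear F \<Longrightarrow> F X = (\<Sum>p\<in>UNIV. \<Sum>q\<in>UNIV. mscale (X$p$q) (F (U p q)))"
  apply (subst decomp[of X])
  by (simp add: mlin_sum) (simp add: mlinear_def)

lemma G_lin: "mlinear (G P Q)"
  by (simp add: mlinear_def G_def vec_eq_iff mscale_def sum.distrib distrib_left sum_distrib_left mult_ac)

lemma G_kron: "G P Q (a \<otimes>\<^sub>K b) = Emap P (Emap Q (a \<otimes>\<^sub>K mat 1) \<otimes>\<^sub>K b)"
  apply (subst L1, subst L2)
  by (simp add: G_def kron_def vec_eq_iff sum_distrib_left mult_ac)

lemma EO_G:
  assumes "mlinear EO" "\<forall>a b. EO (a \<otimes>\<^sub>K b) = Emap P (Emap Q (a \<otimes>\<^sub>K mat 1) \<otimes>\<^sub>K b)"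
  shows "EO X = G P Q X"
proof -
  have "EO (U p q) = G P Q (U p q)" for p q
  proof -
    have "EO (U p q) = EO (U (fst p) (fst q) \<otimes>\<^sub>K U (snd p) (snd q))" by (rule arg_cong[OF U_kron])
    also have "\<dots> = G P Q (U (fst p) (fst q) \<otimes>\<^sub>K U (snd p) (snd q))" by (simp only: assms(2) G_kron[of P Q "U (fst p) (fst q)" "U (snd p) (snd q)"])
    also have "\<dots> = G P Q (U p q)" by (rule arg_cong[OF U_kron[symmetric]])
    finally show ?thesis .
  qed
  then have "(\<Sum>p\<in>UNIV. \<Sum>q\<in>UNIV. mscale (X$p$q) (EO (U p q))) = (\<Sum>p\<in>UNIV. \<Sum>q\<in>UNIV. mscale (X$p$q) (G P Q (U p q)))"
    by presburger
  then show ?thesis by (simp only: mlin_decomp[OF assms(1), of X] mlin_decomp[OF G_lin, of P Q X])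
qed

lemma sum_pair_UNIV: "(\<Sum>x\<in>(UNIV::('a::finite\<times>'b::finite) set). f x) = (\<Sum>p\<in>UNIV. \<Sum>k\<in>UNIV. f (p,k))"
  proof -
  have "(\<Sum>p\<in>UNIV. \<Sum>k\<in>UNIV. f (p,k)) = (\<Sum>x\<in>(UNIV::'a set)\<times>(UNIV::'b set). f x)"
    by (subst sum.cartesian_product) (simp add: case_prod_beta)
  then show ?thesis by simp
qed

lemma inner:
  fixes A B :: "'n::finite \<Rightarrow> 'n \<Rightarrow> complex" and Y :: "('n\<times>'n) cmat" and x y :: "'n \<Rightarrow> complex"
  assumes "\<And>p r. cnj (A p r) = A p r" "\<And>p r. cnj (B p r) = B p r"
  shows "(\<Sum>p\<in>UNIV. \<Sum>q\<in>UNIV. cnj (x p) * ((\<Sum>r\<in>UNIV. A p r * A q r) *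
            (\<Sum>k\<in>UNIV. \<Sum>l\<in>UNIV. B p k * B q l * Y$(p,k)$(q,l))) * y q)
   = (\<Sum>r\<in>UNIV. \<Sum>P\<in>UNIV. \<Sum>R\<in>UNIV. cnj (A (fst P) r * B (fst P) (snd P) * x (fst P)) * Y$P$R
          * (A (fst R) r * B (fst R) (snd R) * y (fst R)))"
proof -
  let ?T = "\<lambda>p q r k l. cnj (x p) * A p r * A q r * B p k * B q l * Y$(p,k)$(q,l) * y q"
  have 1: "(\<Sum>p\<in>UNIV. \<Sum>q\<in>UNIV. cnj (x p) * ((\<Sum>r\<in>UNIV. A p r * A q r) *
            (\<Sum>k\<in>UNIV. \<Sum>l\<in>UNIV. B p k * B q l * Y$(p,k)$(q,l))) * y q)
     = (\<Sum>p\<in>UNIV. \<Sum>q\<in>UNIV. \<Sum>k\<in>UNIV. \<Sum>l\<in>UNIV. \<Sum>r\<in>UNIV. ?T p q r k l)"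
    by (simp add: sum_distrib_left sum_distrib_right mult_ac)
  have 2: "(\<Sum>r\<in>UNIV. \<Sum>P\<in>UNIV. \<Sum>R\<in>UNIV. cnj (A (fst P) r * B (fst P) (snd P) * x (fst P)) * Y$P$R
          * (A (fst R) r * B (fst R) (snd R) * y (fst R)))
     = (\<Sum>r\<in>UNIV. \<Sum>p\<in>UNIV. \<Sum>k\<in>UNIV. \<Sum>q\<in>UNIV. \<Sum>l\<in>UNIV. ?T p q r k l)"
    by (simp add: sum_pair_UNIV assms mult_ac)
  have 3: "(\<Sum>r\<in>UNIV. \<Sum>p\<in>UNIV. \<Sum>k\<in>UNIV. \<Sum>q\<in>UNIV. \<Sum>l\<in>UNIV. ?T p q r k l)
      = (\<Sum>r\<in>UNIV. \<Sum>p\<in>UNIV. \<Sum>q\<in>UNIV. \<Sum>k\<in>UNIV. \<Sum>l\<in>UNIV. ?T p q r k l)"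
    by (rule sum.cong[OF refl], rule sum.cong[OF refl], rule sum.swap)
  have 4: "\<dots> = (\<Sum>p\<in>UNIV. \<Sum>r\<in>UNIV. \<Sum>q\<in>UNIV. \<Sum>k\<in>UNIV. \<Sum>l\<in>UNIV. ?T p q r k l)"
    by (rule sum.swap)
  have 5: "\<dots> = (\<Sum>p\<in>UNIV. \<Sum>q\<in>UNIV. \<Sum>r\<in>UNIV. \<Sum>k\<in>UNIV. \<Sum>l\<in>UNIV. ?T p q r k l)"
    by (rule sum.cong[OF refl], rule sum.swap)
  have 6: "\<dots> = (\<Sum>p\<in>UNIV. \<Sum>q\<in>UNIV. \<Sum>k\<in>UNIV. \<Sum>r\<in>UNIV. \<Sum>l\<in>UNIV. ?T p q r k l)"
    by (rule sum.cong[OF refl], rule sum.cong[OF refl], rule sum.swap)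
  have 7: "\<dots> = (\<Sum>p\<in>UNIV. \<Sum>q\<in>UNIV. \<Sum>k\<in>UNIV. \<Sum>l\<in>UNIV. \<Sum>r\<in>UNIV. ?T p q r k l)"
    by (rule sum.cong[OF refl], rule sum.cong[OF refl], rule sum.cong[OF refl], rule sum.swap)
  show ?thesis using 1 2 3 4 5 6 7 by metis
qed

lemma G_entry: "G P Q Y $ p $ q = (\<Sum>r\<in>UNIV. complex_of_real (sqrt (Q$p$r)) * complex_of_real (sqrt (Q$q$r))) *
   (\<Sum>k\<in>UNIV. \<Sum>l\<in>UNIV. complex_of_real (sqrt (P$p$k)) * complex_of_real (sqrt (P$q$l)) * Y$(p,k)$(q,l))"
  by (simp add: G_def cQ_def real_sqrt_mult)

lemma G_cp: "completely_positive (G P Q)"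
  unfolding completely_positive_def psd_block_def Let_def
proof (intro allI impI)
  fix n :: nat and X :: "nat \<Rightarrow> nat \<Rightarrow> ('a \<times> 'a) cmat" and v :: "nat \<Rightarrow> 'a \<Rightarrow> complex"
  assume H: "\<forall>v. Im (\<Sum>i<n. \<Sum>j<n. \<Sum>p\<in>UNIV. \<Sum>q\<in>UNIV. cnj (v i p) * X i j $ p $ q * v j q) = 0 \<and>
             0 \<le> Re (\<Sum>i<n. \<Sum>j<n. \<Sum>p\<in>UNIV. \<Sum>q\<in>UNIV. cnj (v i p) * X i j $ p $ q * v j q)"
  define A where "A p r = complex_of_real (sqrt (Q$p$r))" for p r
  define B where "B p k = complex_of_real (sqrt (P$p$k))" for p k
  define w where "w r a PP = A (fst PP) r * B (fst PP) (snd PP) * v a (fst PP)" for r a PP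
  define S where "S r = (\<Sum>i<n. \<Sum>j<n. \<Sum>p\<in>UNIV. \<Sum>q\<in>UNIV. cnj (w r i p) * X i j $ p $ q * w r j q)" for r
  have cA: "cnj (A p r) = A p r" for p r by (simp add: A_def)
  have cB: "cnj (B p r) = B p r" for p r by (simp add: B_def)
  have "(\<Sum>i<n. \<Sum>j<n. \<Sum>p\<in>UNIV. \<Sum>q\<in>UNIV. cnj (v i p) * G P Q (X i j) $ p $ q * v j q)
      = (\<Sum>i<n. \<Sum>j<n. \<Sum>r\<in>UNIV. \<Sum>p\<in>UNIV. \<Sum>q\<in>UNIV. cnj (w r i p) * X i j $ p $ q * w r j q)"
  proof (rule sum.cong[OF refl], rule sum.cong[OF refl])
    fix i j
    show "(\<Sum>p\<in>UNIV. \<Sum>q\<in>UNIV. cnj (v i p) * G P Q (X i j) $ p $ q * v j q)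
      = (\<Sum>r\<in>UNIV. \<Sum>p\<in>UNIV. \<Sum>q\<in>UNIV. cnj (w r i p) * X i j $ p $ q * w r j q)"
      unfolding G_entry w_def A_def[symmetric] B_def[symmetric]
      using inner[of A B "v i" "X i j" "v j", OF cA cB] by (simp add: mult.assoc)
  qed
  also have "\<dots> = (\<Sum>r\<in>UNIV. S r)"
    unfolding S_def
    by (subst sum.swap, rule sum.cong[OF refl], rule sum.swap)
  finally have E: "(\<Sum>i<n. \<Sum>j<n. \<Sum>p\<in>UNIV. \<Sum>q\<in>UNIV. cnj (v i p) * G P Q (X i j) $ p $ q * v j q) = (\<Sum>r\<in>UNIV. S r)" .
  have "Im (S r) = 0 \<and> 0 \<le> Re (S r)" for r using H[rule_format, of "w r"] by (simp add: S_def)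
  then show "Im (\<Sum>i<n. \<Sum>j<n. \<Sum>p\<in>UNIV. \<Sum>q\<in>UNIV. cnj (v i p) * G P Q (X i j) $ p $ q * v j q) = 0 \<and>
             0 \<le> Re (\<Sum>i<n. \<Sum>j<n. \<Sum>p\<in>UNIV. \<Sum>q\<in>UNIV. cnj (v i p) * G P Q (X i j) $ p $ q * v j q)"
    unfolding E by (simp add: Im_sum Re_sum sum_nonneg)
qed

lemma mat1_kron: "(mat 1 :: ('n::finite \<times> 'n) cmat) = mat 1 \<otimes>\<^sub>K mat 1"
  by (auto simp: vec_eq_iff kron_def mat_def prod_eq_iff)

lemma cQ_diag: "stochastic Q \<Longrightarrow> cQ Q i i = 1"
  unfolding stochastic_def cQ_def
  by (simp add: real_sqrt_mult_self flip: of_real_sum)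

lemma EO_kron:
  assumes "\<forall>a b. EO (a \<otimes>\<^sub>K b) = Emap P (Emap Q (a \<otimes>\<^sub>K mat 1) \<otimes>\<^sub>K b)"
  shows "EO (a \<otimes>\<^sub>K b) = (\<chi> i j. a$i$j * cQ Q i j * (\<Sum>m\<in>UNIV. \<Sum>l\<in>UNIV.
      complex_of_real (sqrt (P$i$m * P$j$l)) * b$m$l))"
proof -
  have "Emap P (Emap Q (a \<otimes>\<^sub>K mat 1) \<otimes>\<^sub>K b) = (\<chi> i j. a$i$j * cQ Q i j * (\<Sum>m\<in>UNIV. \<Sum>l\<in>UNIV.
      complex_of_real (sqrt (P$i$m * P$j$l)) * b$m$l))"
    by (subst L1, subst L2) (simp add: vec_eq_iff)
  then show ?thesis using assms by simp
qed

theorem mainTheorem6: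
  fixes Pi Q :: "real^'n::finite^'n"
    and EO :: "('n \<times> 'n) cmat \<Rightarrow> 'n cmat"
  assumes "stochastic Pi" and "stochastic Q"
    and "mlinear EO"
    and "\<forall>a b. EO (a \<otimes>\<^sub>K b) = Emap Pi (Emap Q (a \<otimes>\<^sub>K mat 1) \<otimes>\<^sub>K b)"
  shows "completely_positive EO \<and> EO (mat 1) = mat 1 \<and>
    (\<forall>a b. EO (a \<otimes>\<^sub>K b) = a \<diamond> Pmap Q (mat 1) \<diamond> Pmap Pi b \<and>
       EO (a \<otimes>\<^sub>K b) = (\<chi> i j. \<Sum>k\<in>UNIV. \<Sum>m\<in>UNIV. \<Sum>l\<in>UNIV.
          a$i$j * b$m$l * complex_of_real (sqrt (Q$i$k * Q$j$k))
            * complex_of_real (sqrt (Pi$i$m * Pi$j$l))))"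
proof (intro conjI allI)
  have "EO = G Pi Q" using EO_G[OF assms(3) assms(4)] by blast
  then show "completely_positive EO" using G_cp by simp
next
  have K: "EO (a \<otimes>\<^sub>K b) = (\<chi> i j. a$i$j * cQ Q i j * (\<Sum>m\<in>UNIV. \<Sum>l\<in>UNIV.
      complex_of_real (sqrt (Pi$i$m * Pi$j$l)) * b$m$l))" for a b
    using EO_kron[OF assms(4)] .
  show "EO (mat 1) = mat 1"
    unfolding mat1_kron K
    by (simp add: vec_eq_iff mat_def if_distrib sum.delta cQ_diag[OF assms(2)]
         real_sqrt_mult_self cong: if_cong)
       (use assms(1) in \<open>simp add: stochastic_def flip: of_real_sum\<close>)
next
  fix a b
  have K: "EO (a \<otimes>\<^sub>K b) = (\<chi> i j. a$i$j * cQ Q i j * (\<Sum>m\<in>UNIV. \<Sum>l\<in>UNIV.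
      complex_of_real (sqrt (Pi$i$m * Pi$j$l)) * b$m$l))"
    using EO_kron[OF assms(4)] .
  show "EO (a \<otimes>\<^sub>K b) = a \<diamond> Pmap Q (mat 1) \<diamond> Pmap Pi b"
    unfolding K L1b by (simp add: schur_def Pmap_def vec_eq_iff)
  show "EO (a \<otimes>\<^sub>K b) = (\<chi> i j. \<Sum>k\<in>UNIV. \<Sum>m\<in>UNIV. \<Sum>l\<in>UNIV.
          a$i$j * b$m$l * complex_of_real (sqrt (Q$i$k * Q$j$k))
            * complex_of_real (sqrt (Pi$i$m * Pi$j$l)))"
    unfolding K vec_eq_iff
  proof (intro allI)
    fix i j
    let ?F = "\<lambda>k m l. a$i$j * b$m$l * complex_of_real (sqrt (Q$i$k * Q$j$k))
            * complex_of_real (sqrt (Pi$i$m * Pi$j$l))"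
    have "(\<Sum>k\<in>UNIV. \<Sum>m\<in>UNIV. \<Sum>l\<in>UNIV. ?F k m l) = (\<Sum>m\<in>UNIV. \<Sum>l\<in>UNIV. \<Sum>k\<in>UNIV. ?F k m l)"
      by (subst sum.swap, rule sum.cong[OF refl], rule sum.swap)
    also have "\<dots> = (\<chi> i j. a$i$j * cQ Q i j * (\<Sum>m\<in>UNIV. \<Sum>l\<in>UNIV.
      complex_of_real (sqrt (Pi$i$m * Pi$j$l)) * b$m$l)) $ i $ j"
      by (simp add: cQ_def sum_distrib_left sum_distrib_right mult_ac)
    finally show "(\<chi> i j. a$i$j * cQ Q i j * (\<Sum>m\<in>UNIV. \<Sum>l\<in>UNIV.
      complex_of_real (sqrt (Pi$i$m * Pi$j$l)) * b$m$l)) $ i $ j = (\<chi> i j. \<Sum>k\<in>UNIV. \<Sum>m\<in>UNIV. \<Sum>l\<in>UNIV.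
          a$i$j * b$m$l * complex_of_real (sqrt (Q$i$k * Q$j$k))
            * complex_of_real (sqrt (Pi$i$m * Pi$j$l))) $ i $ j" by simp
  qed
qed

end
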